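(* Let $\Omega=B_1$ be the unit ball, and assume (H0), (H0'), (H1) with $\rho=1$, and (H2). Then there exists $c>0$ such that for every $u\in\mathcal{H}_{J,0}(B_1)$ $$\mathcal{E}(u,u)\ge c\int_{B_1}|u(x)|^2M(1-|x|)\,dx,\qquad M(r)=\int_r^1\frac{\ell(s)}{s}\,ds.$$
   Context: $N\ge1$, $B_\varepsilon=\{|z|<\varepsilon\}$. (H0): $J:\mathbb{R}^N\times\mathbb{R}^N\to[0,\infty)$ measurable, $J(x,y)=J(y,x)$, $\sup_x\int\min(1,|x-y|^2)J(x,y)\,dy<\infty$. (H0'): $J(x,y)\ge\mathcal{K}(x-y)\ge0$ with $\mathcal{K}\notin L^1(B_\varepsilon)$ for all $\varepsilon>0$. (H1) with $\rho=1$: there is $\ell:(0,1)\to(0,\infty)$, bounded above and below by positive constants on $[\varepsilon,1)$ for every $\varepsilon\in(0,1)$, with $\mathcal{K}(z)=|z|^{-N}\ell(|z|)$ for $0<|z|<1$ and $M(r)=\int_r^1\ell(s)/s\,ds\to\infty$ as $r\to0^+$. (H2): $\lim_{s\to0^+}\ell(\lambda s)/\ell(s)=1$ for all $\lambda>0$. For a bounded open $\Omega$: $Q_\Omega=(\Omega^c\times\Omega^c)^c$, $\mathcal{E}(u,v)=\frac12\iint_{Q_\Omega}(u(x)-u(y))(v(x)-v(y))J(x,y)\,dx\,dy$, and $\mathcal{H}_{J,0}(\Omega)$ is the set of measurable $u:\mathbb{R}^N\to\mathbb{R}$ with $u|_\Omega\in L^2(\Omega)$, $\mathcal{E}(u,u)<\infty$,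 $u=0$ a.e. on $\Omega^c$. *)

theory Defs
  imports "HOL-Analysis.Analysis"
begin

definition QOmega :: "'a set \<Rightarrow> ('a \<times> 'a) set" where
  "QOmega \<Omega> = - ((- \<Omega>) \<times> (- \<Omega>))"

definition energy :: "('a::euclidean_space \<Rightarrow> 'a \<Rightarrow> real) \<Rightarrow> 'a set \<Rightarrow> ('a \<Rightarrow> real) \<Rightarrow> ennreal" where
  "energy J \<Omega> u = ennreal (1/2) *
     (\<integral>\<^sup>+ z \<in> QOmega \<Omega>. ennreal ((u (fst z) - u (snd z))\<^sup>2 * J (fst z) (snd z)) \<partial>lebesgue)"

definition HJ0 :: "('a::euclidean_space \<Rightarrow> 'a \<Rightarrow> real) \<Rightarrow> 'a set \<Rightarrow> ('a \<Rightarrow> real) set" where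
  "HJ0 J \<Omega> = {u. u \<in> borel_measurable lebesgue
               \<and> (\<integral>\<^sup>+ x \<in> \<Omega>. ennreal ((u x)\<^sup>2) \<partial>lebesgue) < \<infinity>
               \<and> energy J \<Omega> u < \<infinity>
               \<and> (AE x in lebesgue. x \<notin> \<Omega> \<longrightarrow> u x = 0)}"

definition Mfun :: "(real \<Rightarrow> real) \<Rightarrow> real \<Rightarrow> real" where
  "Mfun l r = (LBINT s=r..1. l s / s)"

end

theory Submission
  imports Defs
begin

lemma cone_scale:
  fixes C :: "'a::euclidean_space set"
  assumes C: "C \<in> sets borel" and cone: "\<And>t z. t > 0 \<Longrightarrow> (t *\<^sub>R z \<in> C) = (z \<in> C)" and t: "t > 0"
  shows "emeasure lborel (C \<inter> ball 0 t) = ennreal (t ^ DIM('a)) * emeasure lborel (C \<inter> ball 0 1)"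
proof -
  have D: "(lborel::'a measure) = density (distr lborel borel (\<lambda>x. 0 + t *\<^sub>R x)) (\<lambda>_. \<bar>t\<bar>^DIM('a))"
    by (rule lborel_affine) (use t in simp)
  have pre: "(*\<^sub>R) t -` C \<inter> (*\<^sub>R) t -` ball 0 t = C \<inter> ball 0 1"
    using t by (auto simp: cone)
  have "emeasure lborel (C \<inter> ball 0 t) = emeasure (density (distr lborel borel (\<lambda>x. 0 + t *\<^sub>R x)) (\<lambda>_. \<bar>t\<bar>^DIM('a))) (C \<inter> ball 0 t)"
    by (subst D) (rule refl)
  also have "\<dots> = ennreal (\<bar>t\<bar>^DIM('a)) * emeasure (distr lborel borel (\<lambda>x. 0 + t *\<^sub>R x)) (C \<inter> ball 0 t)"
    using C by (simp add: emeasure_density nn_integral_cmult_indicator)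
  also have "\<dots> = ennreal (t^DIM('a)) * emeasure lborel (C \<inter> ball 0 1)"
    using C t by (subst emeasure_distr) (auto simp: pre)
  finally show ?thesis .
qed

lemma radial_dist:
  fixes C :: "'a::euclidean_space set" and f :: "real \<Rightarrow> ennreal"
  assumes C[measurable]: "C \<in> sets borel" and cone: "\<And>t z. t > 0 \<Longrightarrow> (t *\<^sub>R z \<in> C) = (z \<in> C)"
    and f[measurable]: "f \<in> borel_measurable borel"
  shows "(\<integral>\<^sup>+ z. indicator (C \<inter> ball 0 1) z * f (norm z) \<partial>lborel) =
    (\<integral>\<^sup>+ r. (indicator {0..1} r * ennreal (real DIM('a) * r^(DIM('a)-1)) * emeasure lborel (C \<inter> ball 0 1)) * f r \<partial>lborel)"
proof -
  define \<omega> where "\<omega> = emeasure lborel (C \<inter> ball 0 1)"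
  have S[measurable]: "C \<inter> ball 0 1 \<in> sets borel" by auto
  define N where "N = DIM('a)"
  have N1: "N \<ge> 1" unfolding N_def by (simp add: DIM_positive Suc_leI)
  define \<mu> where "\<mu> = distr (density lborel (indicator (C \<inter> ball 0 1))) borel (norm :: 'a \<Rightarrow> real)"
  define \<nu> where "\<nu> = density lborel (\<lambda>r::real. indicator {0..1} r * ennreal (real N * r^(N-1)) * \<omega>)"
  have eq1: "(\<integral>\<^sup>+ z. indicator (C \<inter> ball 0 1) z * f (norm z) \<partial>lborel) = (\<integral>\<^sup>+ r. f r \<partial>\<mu>)"
    unfolding \<mu>_def by (simp add: nn_integral_distr, subst nn_integral_density) auto
  have eq2: "(\<integral>\<^sup>+ r. (indicator {0..1} r * ennreal (real DIM('a) * r^(DIM('a)-1)) * emeasure lborel (C \<inter> ball 0 1)) * f r \<partial>lborel) = (\<integral>\<^sup>+ r. f r \<partial>\<nu>)"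
    unfolding \<nu>_def \<omega>_def N_def by (simp add: nn_integral_density)
  have fin: "\<omega> < \<infinity>" unfolding \<omega>_def
    using emeasure_mono[of "C \<inter> ball 0 1" "ball 0 1" lborel] emeasure_lborel_ball_finite[of "0::'a" 1]
    by auto
  have lt: "emeasure \<mu> {..<x} = emeasure \<nu> {..<x}" for x :: real
  proof (cases "x \<le> 0")
    case True
    have Z: "(\<lambda>r::real. indicator {0..1} r * ennreal (real N * r ^ (N - 1)) * \<omega> * indicator {..<x} r) = (\<lambda>_. 0)"
      using True by (auto simp: fun_eq_iff split: split_indicator)
    have e: "norm -` {..<x} = ({}::'a set)" using True by (auto, smt (verit) norm_ge_zero)
    have "emeasure \<mu> {..<x} = 0" unfolding \<mu>_def
      by (subst emeasure_distr) (auto simp: e)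
    moreover have "emeasure \<nu> {..<x} = 0" unfolding \<nu>_def
      apply (subst emeasure_density)
        apply measurable
      apply (subst Z) by simp
    ultimately show ?thesis by simp
  next
    case False
    define m where "m = min x 1"
    have m: "0 < m" "m \<le> 1" using False by (auto simp: m_def)
    have "emeasure \<mu> {..<x} = emeasure lborel (C \<inter> ball 0 m)"
    proof -
      have "emeasure \<mu> {..<x} = (\<integral>\<^sup>+ z. indicator (C \<inter> ball 0 1) z * indicator (norm -` {..<x}) z \<partial>lborel)"
      proof -
        have pre: "(norm::'a\<Rightarrow>real) -` {..<x} \<in> sets borel"
          using measurable_sets_borel[OF borel_measurable_norm, of "{..<x}"] by auto
        show ?thesis unfolding \<mu>_def
          apply (subst emeasure_distr)
            apply measurable
          apply (subst emeasure_density)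
          using pre apply auto[2]
          apply (simp add: mult.commute)
          done
      qed
      also have "\<dots> = (\<integral>\<^sup>+ z. indicator (C \<inter> ball 0 m) z \<partial>lborel)"
        by (intro nn_integral_cong) (auto simp: m_def split: split_indicator)
      finally show ?thesis by simp
    qed
    also have "\<dots> = ennreal (m ^ N) * \<omega>"
      unfolding N_def \<omega>_def by (rule cone_scale[OF C cone m(1)])
    finally have A: "emeasure \<mu> {..<x} = ennreal (m ^ N) * \<omega>" .
    have "emeasure \<nu> {..<x} = (\<integral>\<^sup>+ r. \<omega> * (ennreal (real N * r^(N-1)) * indicator {0..m} r) \<partial>lborel)"
      unfolding \<nu>_def
      apply (subst emeasure_density)
        apply simp
       apply simp
      apply (rule nn_integral_cong_AE)
      using AE_lborel_singleton[of x]
      by eventually_elim (auto simp: m_def mult.commute split: split_indicator)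
    also have "\<dots> = \<omega> * (\<integral>\<^sup>+ r. ennreal (real N * r^(N-1)) * indicator {0..m} r \<partial>lborel)"
      by (rule nn_integral_cmult) simp
    also have "(\<integral>\<^sup>+ r. ennreal (real N * r^(N-1)) * indicator {0..m} r \<partial>lborel) = m ^ N - 0 ^ N"
      by (rule nn_integral_FTC_Icc[where F="\<lambda>r. r ^ N"]) (use m in \<open>auto intro!: derivative_eq_intros\<close>)
    finally show ?thesis using A N1 by (simp add: mult.commute power_0_left)
  qed
  have "\<mu> = \<nu>"
  proof (rule measure_eqI_generator_eq_countable[where E="range lessThan" and \<Omega>=UNIV and A="range (\<lambda>n::nat. {..<real n})"])
    show "Int_stable (range lessThan :: real set set)" by (clarsimp simp: Int_stable_def) (metis greaterThan_Int_greaterThan rangeI)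
    show "sets \<mu> = sigma_sets UNIV (range lessThan)" unfolding \<mu>_def
      by (simp add: borel_Iio)
    show "sets \<nu> = sigma_sets UNIV (range lessThan)" unfolding \<nu>_def
      by (simp add: borel_Iio)
    show "\<Union> (range (\<lambda>n::nat. {..<real n})) = UNIV"
      by (auto intro: reals_Archimedean2)
    fix a assume "a \<in> range (\<lambda>n::nat. {..<real n})"
    then obtain n where a: "a = {..<real n}" by auto
    have "emeasure \<mu> a \<le> emeasure (density lborel (indicator (C \<inter> ball 0 1))) UNIV"
      unfolding \<mu>_def a by (subst emeasure_distr) (auto intro!: emeasure_mono)
    also have "\<dots> = \<omega>" unfolding \<omega>_def by (simp add: emeasure_density)
    finally show "emeasure \<mu> a \<noteq> \<infinity>" using fin by (auto simp: top_unique)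
  qed (auto simp: lt)
  then show ?thesis using eq1 eq2 by simp
qed

definition K0 :: "(real \<Rightarrow> real) \<Rightarrow> 'a::euclidean_space \<Rightarrow> real" where
  "K0 l z = (if 0 < norm z \<and> norm z < 1 then norm z powr (- real DIM('a)) * l (norm z) else 0)"

lemma K0_borel: assumes [measurable]: "l \<in> borel_measurable borel" shows "(K0 l :: 'a::euclidean_space \<Rightarrow> real) \<in> borel_measurable borel"
  unfolding K0_def by measurable

lemma ball_in_cone:
  fixes e :: "'a::euclidean_space"
  assumes e: "norm e = 1"
  shows "ball ((3/4) *\<^sub>R e) (1/8) \<subseteq> {z. norm z \<le> 2 * (z \<bullet> e)} \<inter> ball 0 1"
proof
  fix w assume w: "w \<in> ball ((3/4) *\<^sub>R e) (1/8)"
  define d where "d = w - (3/4) *\<^sub>R e"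
  have d: "norm d < 1/8" using w by (simp add: d_def dist_norm norm_minus_commute)
  have ee: "e \<bullet> e = 1" using e by (simp add: dot_square_norm)
  have "\<bar>d \<bullet> e\<bar> \<le> norm d * norm e" by (rule Cauchy_Schwarz_ineq2)
  then have de: "\<bar>d \<bullet> e\<bar> < 1/8" using d e by simp
  have we: "w \<bullet> e = 3/4 + d \<bullet> e" unfolding d_def using ee by (simp add: algebra_simps)
  have "norm w \<le> norm ((3/4) *\<^sub>R e) + norm d" unfolding d_def by (metis norm_triangle_sub add.commute)
  then have nw: "norm w < 7/8" using d e by simp
  show "w \<in> {z. norm z \<le> 2 * (z \<bullet> e)} \<inter> ball 0 1"
    using nw we de by auto
qed

lemma ball_measure_eq:
  fixes c :: "'a::euclidean_space"
  shows "emeasure lborel (ball c r) = emeasure lborel (ball (0::'a) r)"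
proof (cases "r \<ge> 0")
  case True
  have "emeasure lebesgue (ball c r) = emeasure lebesgue (ball (0::'a) r)"
    using emeasure_lebesgue_ball_conv_unit_ball[OF True, of c] emeasure_lebesgue_ball_conv_unit_ball[OF True, of "0::'a"] by simp
  then show ?thesis by simp
next
  case False
  then have e1: "ball c r = {}" and e2: "ball (0::'a) r = {}" by auto
  show ?thesis by (simp only: e1 e2)
qed

lemma kappa_bound:
  fixes l :: "real \<Rightarrow> real" and e x :: "'a::euclidean_space"
  assumes l[measurable]: "l \<in> borel_measurable borel"
    and lnn: "\<And>s. 0 < s \<Longrightarrow> s < 1 \<Longrightarrow> 0 \<le> l s"
    and e: "norm e = 1" and a: "0 < a"
    and reg: "\<And>z. norm z \<le> 2 * (z \<bullet> e) \<Longrightarrow> a \<le> norm z \<Longrightarrow> norm z < 1 \<Longrightarrow> 1 \<le> norm (x + z)"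
  shows "ennreal (real DIM('a)) * emeasure lborel (ball (0::'a) (1/8)) * (\<integral>\<^sup>+ r. indicator {a..<1} r * ennreal (l r / r) \<partial>lborel)
     \<le> (\<integral>\<^sup>+ y. indicator (- ball 0 1) y * ennreal (K0 l (y - x)) \<partial>lborel)"
proof -
  define C where "C = {z::'a. norm z \<le> 2 * (z \<bullet> e)}"
  define N where "N = DIM('a)"
  have N1: "N \<ge> 1" unfolding N_def by (simp add: DIM_positive Suc_leI)
  have Cb[measurable]: "C \<in> sets borel" unfolding C_def
    by (intro borel_closed closed_Collect_le) (auto intro!: continuous_intros)
  have cone: "(t *\<^sub>R z \<in> C) = (z \<in> C)" if "t > 0" for t z
    using that unfolding C_def by (auto simp: mult_le_cancel_left_pos)
  define f where "f r = indicator {a..<1} r * ennreal (r powr (- real N) * l r)" for r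
  have [measurable]: "K0 l \<in> borel_measurable (borel :: 'a measure)" by (rule K0_borel) simp
  have f[measurable]: "f \<in> borel_measurable borel" unfolding f_def by measurable
  define \<omega> where "\<omega> = emeasure lborel (C \<inter> ball 0 1)"
  have \<omega>: "emeasure lborel (ball (0::'a) (1/8)) \<le> \<omega>"
    unfolding \<omega>_def C_def
    using emeasure_mono[OF ball_in_cone[OF e], of lborel] ball_measure_eq[of "(3/4) *\<^sub>R e" "1/8"]
    by auto
  have "(\<integral>\<^sup>+ y. indicator (- ball 0 1) y * ennreal (K0 l (y - x)) \<partial>lborel)
      = (\<integral>\<^sup>+ z. indicator (- ball 0 1) (x + z) * ennreal (K0 l (x + z - x)) \<partial>lborel)"
    by (subst lborel_distr_plus[of x, symmetric], subst nn_integral_distr) auto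
  also have "\<dots> \<ge> (\<integral>\<^sup>+ z. indicator (C \<inter> ball 0 1) z * f (norm z) \<partial>lborel)"
  proof (intro nn_integral_mono)
    fix z :: 'a
    show "indicator (C \<inter> ball 0 1) z * f (norm z) \<le> indicator (- ball 0 1) (x + z) * ennreal (K0 l (x + z - x))"
    proof (cases "z \<in> C \<and> norm z < 1 \<and> a \<le> norm z")
      case True
      then have "1 \<le> norm (x + z)" using reg unfolding C_def by auto
      then have m: "x + z \<in> - ball 0 1" by simp
      have K: "K0 l (x + z - x) = norm z powr (- real N) * l (norm z)" using True a by (simp add: K0_def N_def)
      have "indicator (C \<inter> ball 0 1) z * f (norm z) = ennreal (norm z powr (- real N) * l (norm z))"
        using True by (simp add: f_def)
      also have "\<dots> = indicator (- ball 0 1) (x + z) * ennreal (K0 l (x + z - x))"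
        using m K by simp
      finally show ?thesis by simp
    next
      case False
      then show ?thesis by (auto simp: f_def split: split_indicator)
    qed
  qed
  also have "(\<integral>\<^sup>+ z. indicator (C \<inter> ball 0 1) z * f (norm z) \<partial>lborel)
     = (\<integral>\<^sup>+ r. (indicator {0..1} r * ennreal (real N * r^(N-1)) * \<omega>) * f r \<partial>lborel)"
    unfolding N_def \<omega>_def by (rule radial_dist[OF Cb cone f]) 
  also have "\<dots> = (\<integral>\<^sup>+ r. (ennreal (real N) * \<omega>) * (indicator {a..<1} r * ennreal (l r / r)) \<partial>lborel)"
  proof (intro nn_integral_cong)
    fix r :: real
    show "(indicator {0..1} r * ennreal (real N * r^(N-1)) * \<omega>) * f r = (ennreal (real N) * \<omega>) * (indicator {a..<1} r * ennreal (l r / r))"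
    proof (cases "a \<le> r \<and> r < 1")
      case True
      then have r: "0 < r" using a by auto
      have "r^(N-1) * (r powr (- real N) * l r) = l r / r"
      proof -
        have "r^(N-1) = r powr (real N - 1)" using r N1 by (simp add: powr_realpow[symmetric] of_nat_diff)
        then have h: "r^(N-1) * r powr (- real N) = r powr (-1)" using r by (simp add: powr_add[symmetric])
        have h2: "r powr (-1) = 1 / r" using r by (simp add: powr_minus divide_inverse)
        have "r^(N-1) * (r powr (- real N) * l r) = (r^(N-1) * r powr (- real N)) * l r" by (simp only: mult.assoc)
        also have "\<dots> = l r / r" unfolding h h2 by simp
        finally show ?thesis .
      qed
      moreover have "0 \<le> l r" using lnn True r by auto
      ultimately show ?thesis using True r
        by (simp add: f_def ennreal_mult[symmetric] mult.assoc mult.left_commute)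
    next
      case False
      then show ?thesis by (auto simp: f_def split: split_indicator)
    qed
  qed
  also have "\<dots> = (ennreal (real N) * \<omega>) * (\<integral>\<^sup>+ r. indicator {a..<1} r * ennreal (l r / r) \<partial>lborel)"
    by (rule nn_integral_cmult) measurable
  finally show ?thesis unfolding N_def
    by (rule order_trans[rotated]) (intro mult_right_mono mult_left_mono \<omega>, auto)
qed

definition Mn :: "(real \<Rightarrow> real) \<Rightarrow> real \<Rightarrow> ennreal" where
  "Mn l a = (\<integral>\<^sup>+ r. indicator {a..<1} r * ennreal (l r / r) \<partial>lborel)"

lemma Mn_double:
  fixes l :: "real \<Rightarrow> real"
  assumes l[measurable]: "l \<in> borel_measurable borel"
    and lnn: "\<And>s. 0 < s \<Longrightarrow> s < 1 \<Longrightarrow> 0 \<le> l s"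
    and hd: "\<And>s. 0 < s \<Longrightarrow> s < d \<Longrightarrow> l (s/2) \<le> 2 * l s"
    and \<delta>: "0 < \<delta>" "4 * \<delta> \<le> 1" "4 * \<delta> \<le> d"
  shows "Mn l \<delta> \<le> 3 * Mn l (2 * \<delta>)"
proof -
  define g where "g r = indicator {\<delta>..<2*\<delta>} r * ennreal (l r / r)" for r
  have g[measurable]: "g \<in> borel_measurable borel" unfolding g_def by measurable
  have "Mn l \<delta> = (\<integral>\<^sup>+ r. g r + indicator {2*\<delta>..<1} r * ennreal (l r / r) \<partial>lborel)"
    unfolding Mn_def g_def using \<delta> by (intro nn_integral_cong) (auto split: split_indicator)
  also have "\<dots> = (\<integral>\<^sup>+ r. g r \<partial>lborel) + Mn l (2 * \<delta>)"
    unfolding Mn_def by (rule nn_integral_add) auto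
  also have "(\<integral>\<^sup>+ r. g r \<partial>lborel) = ennreal \<bar>1/2\<bar> * (\<integral>\<^sup>+ u. g (0 + (1/2) * u) \<partial>lborel)"
    by (rule nn_integral_real_affine) auto
  also have "\<dots> = (\<integral>\<^sup>+ u. ennreal (1/2) * g (u/2) \<partial>lborel)"
    by (subst nn_integral_cmult) auto
  also have "\<dots> \<le> (\<integral>\<^sup>+ u. 2 * (indicator {2*\<delta>..<1} u * ennreal (l u / u)) \<partial>lborel)"
  proof (intro nn_integral_mono)
    fix u :: real
    show "ennreal (1/2) * g (u/2) \<le> 2 * (indicator {2*\<delta>..<1} u * ennreal (l u / u))"
    proof (cases "2*\<delta> \<le> u \<and> u < 4*\<delta>")
      case True
      then have u: "0 < u" "u < d" "u < 1" using \<delta> by auto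
      have "l (u/2) \<le> 2 * l u" using hd u by auto
      moreover have "0 \<le> l (u/2)" using lnn u by auto
      ultimately have le: "1/2 * (l (u/2) / (u/2)) \<le> 2 * (l u / u)"
        using u by (simp add: field_simps)
      have gg: "g (u/2) = ennreal (l (u/2) / (u/2))" using True by (simp add: g_def)
      have "ennreal (1/2) * g (u/2) = ennreal (1/2 * (l (u/2) / (u/2)))"
        unfolding gg by (rule ennreal_mult'[symmetric]) simp
      also have "\<dots> \<le> ennreal (2 * (l u / u))" using le by (rule ennreal_leI)
      also have "\<dots> = ennreal 2 * ennreal (l u / u)"
        by (rule ennreal_mult') simp
      also have "\<dots> = 2 * (indicator {2*\<delta>..<1} u * ennreal (l u / u))"
        using True u by simp
      finally show ?thesis .
    next
      case False
      then have "g (u/2) = 0" unfolding g_def by (auto split: split_indicator)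
      then show ?thesis by simp
    qed
  qed
  also have "\<dots> = 2 * Mn l (2 * \<delta>)" unfolding Mn_def by (rule nn_integral_cmult) auto
  finally have "Mn l \<delta> \<le> 2 * Mn l (2 * \<delta>) + Mn l (2 * \<delta>)" by (simp add: add_right_mono)
  also have "\<dots> = (2 + 1) * Mn l (2 * \<delta>)" by (simp only: distrib_right mult_1)
  also have "(2 + 1 :: ennreal) = 3" by simp
  finally show ?thesis .
qed

lemma Mn_upper:
  fixes l :: "real \<Rightarrow> real"
  assumes l[measurable]: "l \<in> borel_measurable borel"
    and b: "\<And>s. \<delta>0 \<le> s \<Longrightarrow> s < 1 \<Longrightarrow> l s \<le> b" and b0: "0 \<le> b"
    and \<delta>: "0 < \<delta>0" "\<delta>0 \<le> \<delta>" "\<delta> \<le> 1"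
  shows "Mn l \<delta> \<le> ennreal (b / \<delta>0 * (1 - \<delta>))"
proof -
  have "Mn l \<delta> \<le> (\<integral>\<^sup>+ r. ennreal (b / \<delta>0) * indicator {\<delta>..<1} r \<partial>lborel)"
    unfolding Mn_def
  proof (intro nn_integral_mono)
    fix r :: real
    show "indicator {\<delta>..<1} r * ennreal (l r / r) \<le> ennreal (b / \<delta>0) * indicator {\<delta>..<1} r"
    proof (cases "\<delta> \<le> r \<and> r < 1")
      case True
      then have r: "\<delta>0 \<le> r" "0 < r" using \<delta> by auto
      have "l r / r \<le> b / \<delta>0"
      proof (cases "l r \<le> 0")
        case True then show ?thesis using r b0 \<delta> by (smt (verit) divide_nonneg_nonneg divide_nonpos_pos)
      next
        case False
        have "l r / r \<le> b / r" using b[of r] True r by (simp add: divide_right_mono)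
        also have "\<dots> \<le> b / \<delta>0" using r b0 \<delta> by (simp add: frac_le)
        finally show ?thesis .
      qed
      then show ?thesis using True by (simp add: ennreal_leI)
    qed simp
  qed
  also have "\<dots> = ennreal (b / \<delta>0) * ennreal (1 - \<delta>)"
    using \<delta> by (subst nn_integral_cmult_indicator) auto
  also have "\<dots> = ennreal (b / \<delta>0 * (1 - \<delta>))"
    by (rule ennreal_mult[symmetric]) (use \<delta> b0 in auto)
  finally show ?thesis .
qed

lemma Mn_lower:
  fixes l :: "real \<Rightarrow> real"
  assumes l[measurable]: "l \<in> borel_measurable borel"
    and a: "\<And>s. 3/4 \<le> s \<Longrightarrow> s < 1 \<Longrightarrow> a \<le> l s" and a0: "0 \<le> a"
    and t: "0 \<le> t" "t \<le> 1"
  shows "ennreal (a * (t/4)) \<le> Mn l (1 - t/4)"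
proof -
  have "ennreal (a * (t/4)) = ennreal a * ennreal (t/4)"
    by (rule ennreal_mult') (use a0 in simp)
  also have "\<dots> = (\<integral>\<^sup>+ r. ennreal a * indicator {1 - t/4..<1} r \<partial>lborel)"
    using t a0 by (subst nn_integral_cmult_indicator) auto
  also have "\<dots> \<le> Mn l (1 - t/4)"
    unfolding Mn_def
  proof (intro nn_integral_mono)
    fix r :: real
    show "ennreal a * indicator {1 - t/4..<1} r \<le> indicator {1 - t/4..<1} r * ennreal (l r / r)"
    proof (cases "1 - t/4 \<le> r \<and> r < 1")
      case True
      then have r: "3/4 \<le> r" "r < 1" using t by auto
      have "a \<le> l r" using a r by auto
      also have "l r \<le> l r / r"
      proof -
        have "l r * r \<le> l r * 1" using r a0 \<open>a \<le> l r\<close> by (intro mult_left_mono) auto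
        then show ?thesis using r by (simp add: le_divide_eq)
      qed
      finally show ?thesis using True by (simp add: ennreal_leI)
    qed simp
  qed
  finally show ?thesis .
qed

lemma geo1:
  fixes e z :: "'a::euclidean_space"
  assumes e: "norm e = 1" and t: "0 \<le> t" and z: "norm z \<le> 2 * (z \<bullet> e)" and zz: "2 * (1 - t) \<le> norm z"
  shows "1 \<le> norm (t *\<^sub>R e + z)"
proof -
  have "(t *\<^sub>R e + z) \<bullet> e = t + z \<bullet> e" using e by (simp add: algebra_simps dot_square_norm)
  also have "\<dots> \<ge> 1" using z zz by (smt (verit))
  finally have "1 \<le> (t *\<^sub>R e + z) \<bullet> e" .
  also have "\<dots> \<le> norm (t *\<^sub>R e + z) * norm e" by (rule norm_cauchy_schwarz)
  finally show ?thesis using e by simp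
qed

lemma geo2:
  fixes e z :: "'a::euclidean_space"
  assumes e: "norm e = 1" and t: "0 \<le> t" "t \<le> 1" and z: "norm z \<le> 2 * (z \<bullet> e)" and zz: "1 - t/4 \<le> norm z"
  shows "1 \<le> norm (t *\<^sub>R e + z)"
proof -
  define \<rho> where "\<rho> = norm z"
  have ee: "e \<bullet> e = 1" using e by (simp add: dot_square_norm)
  have s1: "(norm (t *\<^sub>R e + z))^2 = (t *\<^sub>R e + z) \<bullet> (t *\<^sub>R e + z)" by (simp add: power2_norm_eq_inner)
  have s2: "(t *\<^sub>R e + z) \<bullet> (t *\<^sub>R e + z) = t^2 * (e \<bullet> e) + 2 * t * (z \<bullet> e) + z \<bullet> z"
    by (simp add: inner_add_left inner_add_right inner_commute power2_eq_square algebra_simps)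
  have s3: "z \<bullet> z = \<rho>^2" by (simp add: \<rho>_def power2_norm_eq_inner)
  have sq: "(norm (t *\<^sub>R e + z))^2 = t^2 + 2 * t * (z \<bullet> e) + \<rho>^2"
    using s1 s2 s3 ee by simp
  have "t^2 + 2 * t * (z \<bullet> e) + \<rho>^2 \<ge> t * \<rho> + \<rho>^2"
  proof -
    have "t * \<rho> \<le> t * (2 * (z \<bullet> e))" using z t unfolding \<rho>_def by (intro mult_left_mono) auto
    moreover have "0 \<le> t^2" by simp
    ultimately show ?thesis by linarith
  qed
  moreover have "t * \<rho> + \<rho>^2 \<ge> 1"
  proof -
    have r: "1 - t/4 \<le> \<rho>" "0 \<le> 1 - t/4" using zz t unfolding \<rho>_def by auto
    have "(1 - t/4)^2 \<le> \<rho>^2" using r by (simp add: power_mono)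
    moreover have "t * (1 - t/4) \<le> t * \<rho>" using r t by (simp add: mult_left_mono)
    moreover have "(1 - t/4)^2 + t * (1 - t/4) \<ge> 1"
    proof -
      have tt: "t * t \<le> t" using t by (simp add: mult_left_le)
      have "(1 - t/4)^2 + t * (1 - t/4) = 1 + t/2 - 3/16*(t*t)" by (simp add: power2_eq_square algebra_simps)
      then show ?thesis using tt t by linarith
    qed
    ultimately show ?thesis by linarith
  qed
  ultimately have "1 \<le> (norm (t *\<^sub>R e + z))^2" using sq by linarith
  then show ?thesis using power2_le_imp_le[of 1 "norm (t *\<^sub>R e + z)"] by simp
qed

lemma energy_lower:
  fixes J :: "'a::euclidean_space \<Rightarrow> 'a \<Rightarrow> real" and K :: "'a \<Rightarrow> real" and l :: "real \<Rightarrow> real"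
  assumes J_sym: "\<And>x y. J x y = J y x"
    and K_nonneg: "\<And>z. K z \<ge> 0"
    and J_K: "\<And>x y. J x y \<ge> K (x - y)"
    and K_form: "\<And>z. 0 < norm z \<Longrightarrow> norm z < 1 \<Longrightarrow> K z = norm z powr (- real DIM('a)) * l (norm z)"
    and l[measurable]: "l \<in> borel_measurable borel"
    and u: "u \<in> HJ0 J (ball 0 1)"
  obtains v where "v \<in> borel_measurable borel" "AE x in lborel. u x = v x"
    "ennreal (1/2) * (\<integral>\<^sup>+ x. indicator (ball 0 1) x * ennreal ((v x)\<^sup>2) *
        (\<integral>\<^sup>+ y. indicator (- ball 0 1) y * ennreal (K0 l (y - x)) \<partial>lborel) \<partial>lborel)
      \<le> energy J (ball 0 1) u"
proof -
  have K0m[measurable]: "K0 l \<in> borel_measurable (borel :: 'a measure)" by (rule K0_borel) simp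
  have JK0: "K0 l (y - x) \<le> J x y" for x y :: 'a
  proof -
    have "K0 l (y - x) \<le> K (y - x)"
      using K_form[of "y - x"] K_nonneg[of "y - x"] unfolding K0_def by auto
    also have "\<dots> \<le> J y x" by (rule J_K)
    finally show ?thesis by (simp add: J_sym)
  qed
  from u have um: "u \<in> borel_measurable lebesgue" and uz: "AE x in lebesgue. x \<notin> ball 0 1 \<longrightarrow> u x = 0"
    by (auto simp: HJ0_def)
  obtain v where vm: "v \<in> borel_measurable lborel" and uv: "AE x in lborel. u x = v x"
    using completion_ex_borel_measurable_real[OF um] by auto
  have vb[measurable]: "v \<in> borel_measurable borel" using vm by simp
  have uz': "AE x in lborel. x \<notin> ball 0 1 \<longrightarrow> u x = 0" using uz by (simp add: AE_completion_iff)
  have P: "AE x in lborel. u x = v x \<and> (x \<notin> ball 0 1 \<longrightarrow> u x = 0)" using uv uz' by eventually_elim auto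
  obtain N where NP: "{x \<in> space lborel. \<not> (u x = v x \<and> (x \<notin> ball 0 1 \<longrightarrow> u x = 0))} \<subseteq> N"
    and N0: "emeasure lborel N = 0" and Nb: "N \<in> sets lborel"
    using P by (rule AE_E)
  have N: "N \<in> null_sets lborel" using N0 Nb by (simp add: null_sets_def)
  have N1: "N \<times> UNIV \<in> null_sets (lborel \<Otimes>\<^sub>M (lborel :: 'a measure))"
    using Nb N by (auto simp: null_sets_def lborel.emeasure_pair_measure_Times intro!: pair_measureI)
  have N2: "UNIV \<times> N \<in> null_sets (lborel \<Otimes>\<^sub>M (lborel :: 'a measure))"
    using Nb N by (auto simp: null_sets_def lborel.emeasure_pair_measure_Times intro!: pair_measureI)
  have AEz: "AE z in lborel \<Otimes>\<^sub>M lborel. fst z \<notin> N \<and> snd z \<notin> (N :: 'a set)"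
    using AE_not_in[OF N1] AE_not_in[OF N2] by eventually_elim auto
  define F where "F z = indicator (ball 0 1 \<times> - ball 0 1) z * ennreal ((v (fst z))\<^sup>2 * K0 l (snd z - fst z))" for z :: "'a \<times> 'a"
  have Fm[measurable]: "F \<in> borel_measurable (lborel \<Otimes>\<^sub>M lborel)" unfolding F_def by measurable
  have E1: "energy J (ball 0 1) u = ennreal (1/2) * (\<integral>\<^sup>+ z. ennreal ((u (fst z) - u (snd z))\<^sup>2 * J (fst z) (snd z)) * indicator (QOmega (ball 0 1)) z \<partial>(lborel \<Otimes>\<^sub>M lborel))"
    unfolding energy_def nn_integral_completion lborel_prod ..
  have E2: "(\<integral>\<^sup>+ z. ennreal ((u (fst z) - u (snd z))\<^sup>2 * J (fst z) (snd z)) * indicator (QOmega (ball 0 1)) z \<partial>(lborel \<Otimes>\<^sub>M lborel))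
      \<ge> (\<integral>\<^sup>+ z. F z \<partial>(lborel \<Otimes>\<^sub>M lborel))"
  proof (rule nn_integral_mono_AE)
    show "AE z in lborel \<Otimes>\<^sub>M lborel. F z \<le> ennreal ((u (fst z) - u (snd z))\<^sup>2 * J (fst z) (snd z)) * indicator (QOmega (ball 0 1)) z"
      using AEz
    proof eventually_elim
      case (elim z)
      obtain x y where z: "z = (x, y)" by (cases z)
      have Px: "u x = v x" and Py: "y \<notin> ball 0 1 \<Longrightarrow> u y = 0" using elim NP unfolding z by auto
      show ?case
      proof (cases "x \<in> ball 0 1 \<and> y \<notin> ball 0 1")
        case True
        then have q: "z \<in> QOmega (ball 0 1)" unfolding z QOmega_def by auto
        have "(v x)\<^sup>2 * K0 l (y - x) \<le> (v x)\<^sup>2 * J x y" by (intro mult_left_mono JK0) auto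
        also have "\<dots> = (u x - u y)\<^sup>2 * J x y" using Px Py True by simp
        finally show ?thesis using True q unfolding F_def z by (simp add: ennreal_leI)
      next
        case False
        then show ?thesis unfolding F_def z by simp
      qed
    qed
  qed
  have "(\<integral>\<^sup>+ z. F z \<partial>(lborel \<Otimes>\<^sub>M lborel)) = (\<integral>\<^sup>+ x. \<integral>\<^sup>+ y. F (x, y) \<partial>lborel \<partial>lborel)"
    by (rule lborel.nn_integral_fst[symmetric]) (rule Fm)
  also have "\<dots> = (\<integral>\<^sup>+ x. indicator (ball 0 1) x * ennreal ((v x)\<^sup>2) *
        (\<integral>\<^sup>+ y. indicator (- ball 0 1) y * ennreal (K0 l (y - x)) \<partial>lborel) \<partial>lborel)"
  proof (rule nn_integral_cong)
    fix x :: 'a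
    have "(\<integral>\<^sup>+ y. F (x, y) \<partial>lborel) = (\<integral>\<^sup>+ y. (indicator (ball 0 1) x * ennreal ((v x)\<^sup>2)) * (indicator (- ball 0 1) y * ennreal (K0 l (y - x))) \<partial>lborel)"
      unfolding F_def by (intro nn_integral_cong, subst ennreal_mult') (simp_all add: indicator_times mult_ac)
    also have "\<dots> = (indicator (ball 0 1) x * ennreal ((v x)\<^sup>2)) * (\<integral>\<^sup>+ y. indicator (- ball 0 1) y * ennreal (K0 l (y - x)) \<partial>lborel)"
      by (rule nn_integral_cmult) measurable
    finally show "(\<integral>\<^sup>+ y. F (x, y) \<partial>lborel) = indicator (ball 0 1) x * ennreal ((v x)\<^sup>2) *
        (\<integral>\<^sup>+ y. indicator (- ball 0 1) y * ennreal (K0 l (y - x)) \<partial>lborel)" .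
  qed
  finally have E3: "(\<integral>\<^sup>+ z. F z \<partial>(lborel \<Otimes>\<^sub>M lborel)) = (\<integral>\<^sup>+ x. indicator (ball 0 1) x * ennreal ((v x)\<^sup>2) *
        (\<integral>\<^sup>+ y. indicator (- ball 0 1) y * ennreal (K0 l (y - x)) \<partial>lborel) \<partial>lborel)" .
  have "ennreal (1/2) * (\<integral>\<^sup>+ x. indicator (ball 0 1) x * ennreal ((v x)\<^sup>2) *
        (\<integral>\<^sup>+ y. indicator (- ball 0 1) y * ennreal (K0 l (y - x)) \<partial>lborel) \<partial>lborel) \<le> energy J (ball 0 1) u"
    unfolding E1 E3[symmetric] by (rule mult_left_mono[OF E2]) simp
  with vb uv show ?thesis by (rule that)
qed

lemma Mn_meas:
  fixes l :: "real \<Rightarrow> real"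
  assumes [measurable]: "l \<in> borel_measurable borel"
  shows "(\<lambda>x::'a::euclidean_space. Mn l (1 - norm x)) \<in> borel_measurable borel"
proof -
  have e: "indicator {1 - norm x..<1} r * ennreal (l r / r) = (if 1 - norm x \<le> r \<and> r < 1 then ennreal (l r / r) else 0)" for x :: 'a and r :: real
    by (simp split: split_indicator)
  show ?thesis unfolding Mn_def e by measurable
qed

lemma Mfun_le_Mn:
  fixes l :: "real \<Rightarrow> real"
  assumes l[measurable]: "l \<in> borel_measurable borel"
    and lnn: "\<And>s. 0 < s \<Longrightarrow> s < 1 \<Longrightarrow> 0 \<le> l s"
    and a: "0 < a" "a \<le> 1"
  shows "ennreal (Mfun l a) \<le> Mn l a"
proof -
  have "Mfun l a = (LBINT s:{a..1}. l s / s)"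
    unfolding Mfun_def by (metis interval_integral_Icc one_ereal_def a(2))
  also have "\<dots> = (\<integral> s. indicator {a..1} s * (l s / s) \<partial>lborel)"
    by (simp add: set_lebesgue_integral_def)
  also have "\<dots> = enn2real (\<integral>\<^sup>+ s. ennreal (indicator {a..1} s * (l s / s)) \<partial>lborel)"
  proof (rule integral_eq_nn_integral)
    show "(\<lambda>s. indicator {a..1} s * (l s / s)) \<in> borel_measurable lborel" by measurable
    show "AE s in lborel. 0 \<le> indicator {a..1} s * (l s / s)"
      using AE_lborel_singleton[of 1]
    proof eventually_elim
      case (elim s)
      show ?case
      proof (cases "a \<le> s \<and> s \<le> 1")
        case True
        then have "0 < s" "s < 1" using a elim by auto
        then show ?thesis using True lnn[of s] by simp
      qed simp
    qed
  qed
  also have "(\<integral>\<^sup>+ s. ennreal (indicator {a..1} s * (l s / s)) \<partial>lborel) = Mn l a"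
    unfolding Mn_def
    apply (rule nn_integral_cong_AE)
    using AE_lborel_singleton[of 1]
    by eventually_elim (auto split: split_indicator)
  finally have eq: "Mfun l a = enn2real (Mn l a)" .
  show ?thesis
  proof (cases "Mn l a = \<infinity>")
    case True then show ?thesis by simp
  next
    case False then show ?thesis unfolding eq by (simp add: ennreal_enn2real less_top)
  qed
qed

theorem mainTheorem5:
  fixes J :: "'a::euclidean_space \<Rightarrow> 'a \<Rightarrow> real"
    and K :: "'a \<Rightarrow> real"
    and l :: "real \<Rightarrow> real"
  assumes J_meas: "(\<lambda>z. J (fst z) (snd z)) \<in> borel_measurable lebesgue"
    and J_nonneg: "\<And>x y. J x y \<ge> 0"
    and J_sym: "\<And>x y. J x y = J y x"
    and J_int: "\<exists>C::real. \<forall>x. (\<integral>\<^sup>+ y. ennreal (min 1 ((norm (x - y))\<^sup>2) * J x y) \<partial>lebesgue) \<le> ennreal C"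
    and K_nonneg: "\<And>z. K z \<ge> 0"
    and J_K: "\<And>x y. J x y \<ge> K (x - y)"
    and K_not_L1: "\<And>\<epsilon>. \<epsilon> > 0 \<Longrightarrow> (\<integral>\<^sup>+ z \<in> ball 0 \<epsilon>. ennreal (K z) \<partial>lebesgue) = \<infinity>"
    and l_meas: "l \<in> borel_measurable borel"
    and l_bounds: "\<And>\<epsilon>. 0 < \<epsilon> \<Longrightarrow> \<epsilon> < 1 \<Longrightarrow>
        \<exists>a b. 0 < a \<and> 0 < b \<and> (\<forall>s. \<epsilon> \<le> s \<and> s < 1 \<longrightarrow> a \<le> l s \<and> l s \<le> b)"
    and K_form: "\<And>z. 0 < norm z \<Longrightarrow> norm z < 1 \<Longrightarrow>
        K z = norm z powr (- real DIM('a)) * l (norm z)"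
    and M_infty: "filterlim (Mfun l) at_top (at_right 0)"
    and H2: "\<And>t. t > 0 \<Longrightarrow> ((\<lambda>s. l (t * s) / l s) \<longlongrightarrow> 1) (at_right 0)"
  shows "\<exists>c>0. \<forall>u \<in> HJ0 J (ball 0 1).
           energy J (ball 0 1) u \<ge>
             ennreal c * (\<integral>\<^sup>+ x \<in> ball 0 1. ennreal ((u x)\<^sup>2 * Mfun l (1 - norm x)) \<partial>lebesgue)"
proof -
  have lpos: "0 < l s" if s: "0 < s" "s < 1" for s
  proof -
    obtain a b where "0 < a" "\<forall>s'. s \<le> s' \<and> s' < 1 \<longrightarrow> a \<le> l s' \<and> l s' \<le> b"
      using l_bounds[OF s] by blast
    then show ?thesis using s by force
  qed
  have lnn: "0 \<le> l s" if "0 < s" "s < 1" for s using lpos[OF that] by simp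
  have "((\<lambda>s. l ((1/2) * s) / l s) \<longlongrightarrow> 1) (at_right 0)" by (rule H2) simp
  then have "eventually (\<lambda>s. l ((1/2) * s) / l s < 2) (at_right 0)" by (rule order_tendstoD) simp
  then obtain b0 :: real where b0: "b0 > 0" "\<And>s. 0 < s \<Longrightarrow> s < b0 \<Longrightarrow> l ((1/2) * s) / l s < 2"
    by (auto simp: eventually_at_right_field)
  define d where "d = min b0 1"
  have hd: "l (s/2) \<le> 2 * l s" if s: "0 < s" "s < d" for s
  proof -
    have "0 < l s" using lpos s by (simp add: d_def)
    moreover have "l ((1/2) * s) / l s < 2" using b0 s by (simp add: d_def)
    ultimately have "l ((1/2) * s) < 2 * l s" by (simp add: divide_less_eq)
    then show ?thesis by simp
  qed
  define \<delta>0 where "\<delta>0 = min (d/4) (1/4)"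
  have \<delta>0: "0 < \<delta>0" "\<delta>0 < 1" "4*\<delta>0 \<le> 1" "4*\<delta>0 \<le> d" using b0 by (auto simp: \<delta>0_def d_def)
  obtain a1 b1 where ab1: "0 < a1" "0 < b1" "\<forall>s. \<delta>0 \<le> s \<and> s < 1 \<longrightarrow> a1 \<le> l s \<and> l s \<le> b1"
    using l_bounds[OF \<delta>0(1) \<delta>0(2)] by blast
  obtain a2 b2 where ab2: "0 < a2" "0 < b2" "\<forall>s. 3/4 \<le> s \<and> s < 1 \<longrightarrow> a2 \<le> l s \<and> l s \<le> b2"
    using l_bounds[of "3/4"] by force
  define w0 where "w0 = measure lborel (ball (0::'a) (1/8))"
  have w0: "0 < w0" unfolding w0_def using content_ball_pos[of "1/8" "0::'a"] by simp
  have w0e: "emeasure lborel (ball (0::'a) (1/8)) = ennreal w0"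
    unfolding w0_def using emeasure_lborel_ball_finite[of "0::'a" "1/8"]
    by (intro emeasure_eq_ennreal_measure) auto
  define Nn where "Nn = real DIM('a)"
  have Nn: "0 < Nn" by (simp add: Nn_def)
  define m where "m = min (1/3) (a2 * \<delta>0 / (4 * b1))"
  have m: "0 < m" "m \<le> 1/3" "m \<le> a2 * \<delta>0 / (4 * b1)" using ab1 ab2 \<delta>0 by (auto simp: m_def)
  define c where "c = Nn * w0 * m"
  have c: "0 < c" using Nn w0 m by (simp add: c_def)
  define \<kappa> where "\<kappa> x = (\<integral>\<^sup>+ y. indicator (- ball 0 1) y * ennreal (K0 l (y - x)) \<partial>lborel)" for x :: 'a
  have key: "ennreal c * Mn l (1 - norm x) \<le> \<kappa> x" if x: "x \<in> ball 0 1" for x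
  proof -
    define t where "t = norm x"
    have t: "0 \<le> t" "t < 1" using x by (auto simp: t_def)
    show ?thesis
    proof (cases "x = 0")
      case True
      then have "Mn l (1 - norm x) = 0" by (simp add: Mn_def)
      then show ?thesis by simp
    next
      case False
      then have tp: "0 < t" by (simp add: t_def)
      define e where "e = (1/t) *\<^sub>R x"
      have e: "norm e = 1" using tp by (simp add: e_def t_def)
      have xe: "x = t *\<^sub>R e" using tp by (simp add: e_def)
      show ?thesis
      proof (cases "1 - t \<le> \<delta>0")
        case True
        define \<delta> where "\<delta> = 1 - t"
        have \<delta>: "0 < \<delta>" "4*\<delta> \<le> 1" "4*\<delta> \<le> d" using t True \<delta>0 by (auto simp: \<delta>_def)
        have reg: "1 \<le> norm (x + z)" if "norm z \<le> 2 * (z \<bullet> e)" "2 * \<delta> \<le> norm z" "norm z < 1" for z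
          unfolding xe using geo1[OF e t(1)] that by (simp add: \<delta>_def)
        have "ennreal (real DIM('a)) * emeasure lborel (ball (0::'a) (1/8)) * (\<integral>\<^sup>+ r. indicator {2*\<delta>..<1} r * ennreal (l r / r) \<partial>lborel) \<le> \<kappa> x"
          unfolding \<kappa>_def by (rule kappa_bound[OF l_meas lnn e _ reg]) (use \<delta> in auto)
        then have kb: "ennreal (Nn * w0) * Mn l (2*\<delta>) \<le> \<kappa> x"
          unfolding Mn_def Nn_def w0e using w0 by (simp add: ennreal_mult)
        have md: "Mn l \<delta> \<le> 3 * Mn l (2*\<delta>)" by (rule Mn_double[OF l_meas lnn hd \<delta>])
        have cle: "c \<le> Nn * w0 / 3" using m Nn w0 unfolding c_def
          by (simp add: mult_left_mono)
        have "ennreal c * Mn l (1 - norm x) \<le> ennreal (Nn * w0 / 3) * (3 * Mn l (2*\<delta>))"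
          using md cle unfolding \<delta>_def t_def by (intro mult_mono) (auto intro: ennreal_leI)
        also have "\<dots> = (ennreal (Nn * w0 / 3) * 3) * Mn l (2*\<delta>)" by (simp only: mult.assoc)
        also have "ennreal (Nn * w0 / 3) * 3 = ennreal (Nn * w0)"
        proof -
          have "ennreal (Nn * w0 / 3) * ennreal 3 = ennreal (Nn * w0 / 3 * 3)"
            by (rule ennreal_mult[symmetric]) (use Nn w0 in auto)
          then show ?thesis by simp
        qed
        finally show ?thesis using kb by simp
      next
        case False
        have t4: "0 < 1 - t/4" using t by auto
        have reg: "1 \<le> norm (x + z)" if "norm z \<le> 2 * (z \<bullet> e)" "1 - t/4 \<le> norm z" "norm z < 1" for z
          unfolding xe using geo2[OF e t(1)] that t by simp
        have "ennreal (real DIM('a)) * emeasure lborel (ball (0::'a) (1/8)) * (\<integral>\<^sup>+ r. indicator {1 - t/4..<1} r * ennreal (l r / r) \<partial>lborel) \<le> \<kappa> x"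
          unfolding \<kappa>_def by (rule kappa_bound[OF l_meas lnn e t4 reg])
        then have kb: "ennreal (Nn * w0) * Mn l (1 - t/4) \<le> \<kappa> x"
          unfolding Mn_def Nn_def w0e using w0 by (simp add: ennreal_mult)
        have up: "Mn l (1 - t) \<le> ennreal (b1 / \<delta>0 * (1 - (1 - t)))"
          by (rule Mn_upper[OF l_meas _ _ \<delta>0(1)]) (use ab1 False t in auto)
        have lo: "ennreal (a2 * (t/4)) \<le> Mn l (1 - t/4)"
          by (rule Mn_lower[OF l_meas]) (use ab2 t in auto)
        have ineq: "c * (b1 / \<delta>0 * t) \<le> Nn * w0 * (a2 * (t/4))"
        proof -
          have "m * (b1 / \<delta>0) \<le> a2 * \<delta>0 / (4 * b1) * (b1 / \<delta>0)"
            using m ab1 \<delta>0 by (intro mult_right_mono) auto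
          also have "\<dots> = a2 / 4" using ab1 \<delta>0 by (simp add: field_simps)
          finally have "m * (b1 / \<delta>0) \<le> a2 / 4" .
          then have "(Nn * w0 * t) * (m * (b1 / \<delta>0)) \<le> (Nn * w0 * t) * (a2 / 4)"
            using Nn w0 t by (intro mult_left_mono) auto
          then show ?thesis unfolding c_def by (simp add: algebra_simps)
        qed
        have "ennreal c * Mn l (1 - norm x) \<le> ennreal c * ennreal (b1 / \<delta>0 * t)"
          using up unfolding t_def by (intro mult_left_mono) auto
        also have "\<dots> = ennreal (c * (b1 / \<delta>0 * t))"
          by (rule ennreal_mult[symmetric]) (use c ab1 \<delta>0 t in auto)
        also have "\<dots> \<le> ennreal (Nn * w0 * (a2 * (t/4)))" using ineq by (rule ennreal_leI)
        also have "\<dots> = ennreal (Nn * w0) * ennreal (a2 * (t/4))"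
          by (rule ennreal_mult) (use Nn w0 ab2 t in auto)
        also have "\<dots> \<le> ennreal (Nn * w0) * Mn l (1 - t/4)" using lo by (intro mult_left_mono) auto
        finally show ?thesis using kb by simp
      qed
    qed
  qed
  show ?thesis
  proof (intro exI[of _ "c/2"] conjI ballI)
    show "0 < c/2" using c by simp
    fix u assume u: "u \<in> HJ0 J (ball 0 1)"
    obtain v where vb[measurable]: "v \<in> borel_measurable borel" and uv: "AE x in lborel. u x = v x"
      and En: "ennreal (1/2) * (\<integral>\<^sup>+ x. indicator (ball 0 1) x * ennreal ((v x)\<^sup>2) * \<kappa> x \<partial>lborel) \<le> energy J (ball 0 1) u"
      using energy_lower[OF J_sym K_nonneg J_K K_form l_meas u] unfolding \<kappa>_def by blast
    have Mm[measurable]: "(\<lambda>x::'a. Mn l (1 - norm x)) \<in> borel_measurable borel" by (rule Mn_meas[OF l_meas])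
    have I1: "(\<integral>\<^sup>+ x \<in> ball 0 1. ennreal ((u x)\<^sup>2 * Mfun l (1 - norm x)) \<partial>lebesgue)
        \<le> (\<integral>\<^sup>+ x. indicator (ball 0 1) x * ennreal ((v x)\<^sup>2) * Mn l (1 - norm x) \<partial>lborel)"
      unfolding nn_integral_completion
    proof (rule nn_integral_mono_AE)
      show "AE x in lborel. ennreal ((u x)\<^sup>2 * Mfun l (1 - norm x)) * indicator (ball 0 1) x
          \<le> indicator (ball 0 1) x * ennreal ((v x)\<^sup>2) * Mn l (1 - norm x)"
        using uv
      proof eventually_elim
        case (elim x)
        show ?case
        proof (cases "x \<in> ball 0 1")
          case True
          have a: "0 < 1 - norm x" "1 - norm x \<le> 1" using True by auto
          have "ennreal ((u x)\<^sup>2 * Mfun l (1 - norm x)) = ennreal ((v x)\<^sup>2) * ennreal (Mfun l (1 - norm x))"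
            using elim by (simp add: ennreal_mult')
          also have "\<dots> \<le> ennreal ((v x)\<^sup>2) * Mn l (1 - norm x)"
            by (intro mult_left_mono Mfun_le_Mn[OF l_meas lnn a]) auto
          finally show ?thesis using True by simp
        qed simp
      qed
    qed
    have I2: "ennreal (c/2) * (\<integral>\<^sup>+ x. indicator (ball 0 1) x * ennreal ((v x)\<^sup>2) * Mn l (1 - norm x) \<partial>lborel)
        = ennreal (1/2) * (\<integral>\<^sup>+ x. ennreal c * (indicator (ball 0 1) x * ennreal ((v x)\<^sup>2) * Mn l (1 - norm x)) \<partial>lborel)"
    proof -
      have m0: "(\<lambda>x. indicator (ball 0 1) x * ennreal ((v x)\<^sup>2) * Mn l (1 - norm x)) \<in> borel_measurable borel"
        using Mm vb by (intro borel_measurable_times_ennreal borel_measurable_indicator) auto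
      then have m1: "(\<lambda>x. indicator (ball 0 1) x * ennreal ((v x)\<^sup>2) * Mn l (1 - norm x)) \<in> borel_measurable lborel"
        by simp
      have h: "ennreal (c/2) = ennreal (1/2) * ennreal c"
        using c by (subst ennreal_mult[symmetric]) auto
      show ?thesis unfolding h nn_integral_cmult[OF m1] by (simp only: mult.assoc)
    qed
    have I3: "(\<integral>\<^sup>+ x. ennreal c * (indicator (ball 0 1) x * ennreal ((v x)\<^sup>2) * Mn l (1 - norm x)) \<partial>lborel)
        \<le> (\<integral>\<^sup>+ x. indicator (ball 0 1) x * ennreal ((v x)\<^sup>2) * \<kappa> x \<partial>lborel)"
    proof (rule nn_integral_mono)
      fix x :: 'a
      show "ennreal c * (indicator (ball 0 1) x * ennreal ((v x)\<^sup>2) * Mn l (1 - norm x))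
          \<le> indicator (ball 0 1) x * ennreal ((v x)\<^sup>2) * \<kappa> x"
      proof (cases "x \<in> ball 0 1")
        case True
        have "ennreal c * (indicator (ball 0 1) x * ennreal ((v x)\<^sup>2) * Mn l (1 - norm x))
            = ennreal ((v x)\<^sup>2) * (ennreal c * Mn l (1 - norm x))" using True by (simp add: mult_ac)
        also have "\<dots> \<le> ennreal ((v x)\<^sup>2) * \<kappa> x" using key[OF True] by (rule mult_left_mono) simp
        finally show ?thesis using True by simp
      qed simp
    qed
    have "ennreal (c/2) * (\<integral>\<^sup>+ x \<in> ball 0 1. ennreal ((u x)\<^sup>2 * Mfun l (1 - norm x)) \<partial>lebesgue)
        \<le> ennreal (c/2) * (\<integral>\<^sup>+ x. indicator (ball 0 1) x * ennreal ((v x)\<^sup>2) * Mn l (1 - norm x) \<partial>lborel)"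
      using I1 by (rule mult_left_mono) simp
    also have "\<dots> \<le> ennreal (1/2) * (\<integral>\<^sup>+ x. indicator (ball 0 1) x * ennreal ((v x)\<^sup>2) * \<kappa> x \<partial>lborel)"
      unfolding I2 using I3 by (rule mult_left_mono) simp
    also have "\<dots> \<le> energy J (ball 0 1) u" by (rule En)
    finally show "ennreal (c/2) * (\<integral>\<^sup>+ x \<in> ball 0 1. ennreal ((u x)\<^sup>2 * Mfun l (1 - norm x)) \<partial>lebesgue) \<le> energy J (ball 0 1) u" .
  qed
qed

end
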